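(* Let $\alpha,\beta,\gamma\in\mathbb{C}$ and $k\in\mathbb{N}$, and consider the difference equation $$z_{n+1}=\frac{\alpha+\beta z_{n-k}}{\gamma-z_n},\qquad n=0,1,2,\ldots,$$ with complex initial conditions $z_{-k},\dots,z_{-1},z_0$. Let $s=\sqrt{(\beta-\gamma)^2-4\alpha}=\sqrt{-4\alpha+\beta^2-2\beta\gamma+\gamma^2}$ and let $\bar z_1=\frac{1}{2}\left(-s-\beta+\gamma\right)$, which is a fixed point of the equation. If $$\left|\frac{2\beta}{s+\beta+\gamma}\right|+\left|\frac{\gamma\left(-s-\beta+\gamma\right)-2\alpha}{2(\alpha+\beta\gamma)}\right|<1,$$ then $\bar z_1$ is locally asymptotically stable.
   Context: Here $\sqrt{\cdot}$ denotes a fixed complex square root, used consistently in all occurrences. A fixed point $\bar z$ of $z_{n+1}=f(z_n,\dots,z_{n-k})$ is a point with $\bar z=f(\bar z,\dots,\bar z)$. It is locally asymptotically stable if for every $\epsilon>0$ there is $\delta>0$ such that $|z_{-k}-\bar z|+\dots+|z_0-\bar z|<\delta$ implies $|z_n-\bar z|<\epsilon$ for all $n\ge -k$ (and solutions converge to $\bar z$), as determined via the linearization of the equation at $\bar z$. *)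

theory Defs
  imports Complex_Main
begin

text \<open>Solutions of z(n+1) = (alpha + beta * z(n-k)) / (gamma - z n), n = 0,1,2,...
  A solution is a sequence indexed by integers n >= -k; values at n < -k are irrelevant.\<close>
definition is_solution :: "complex \<Rightarrow> complex \<Rightarrow> complex \<Rightarrow> nat \<Rightarrow> (int \<Rightarrow> complex) \<Rightarrow> bool" where
  "is_solution \<alpha> \<beta> \<gamma> k z \<longleftrightarrow>
     (\<forall>n::int. n \<ge> 0 \<longrightarrow> z (n + 1) = (\<alpha> + \<beta> * z (n - int k)) / (\<gamma> - z n))"

definition is_fixed_point :: "complex \<Rightarrow> complex \<Rightarrow> complex \<Rightarrow> complex \<Rightarrow> bool" where
  "is_fixed_point \<alpha> \<beta> \<gamma> zb \<longleftrightarrow> zb = (\<alpha> + \<beta> * zb) / (\<gamma> - zb)"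

definition locally_asymptotically_stable ::
  "complex \<Rightarrow> complex \<Rightarrow> complex \<Rightarrow> nat \<Rightarrow> complex \<Rightarrow> bool" where
  "locally_asymptotically_stable \<alpha> \<beta> \<gamma> k zb \<longleftrightarrow>
     (\<forall>\<epsilon>>0. \<exists>\<delta>>0. \<forall>z. is_solution \<alpha> \<beta> \<gamma> k z \<and>
        (\<Sum>i\<in>{- int k..0}. cmod (z i - zb)) < \<delta> \<longrightarrow>
          (\<forall>n::int. n \<ge> - int k \<longrightarrow> cmod (z n - zb) < \<epsilon>) \<and>
          ((\<lambda>n::nat. z (int n)) \<longlonglongrightarrow> zb))"

end

theory Submission
  imports Defs
begin

lemma step_bound:
  fixes \<beta> zb c e0 e1 :: complex
  assumes "cmod e0 \<le> \<eta>" "\<eta> < cmod c" "cmod e0 \<le> M" "cmod e1 \<le> M"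
  shows "cmod ((\<beta>*e1 + zb*e0)/(c - e0)) \<le> (cmod zb + cmod \<beta>)/(cmod c - \<eta>) * M"
proof -
  have d: "cmod c - \<eta> \<le> cmod (c - e0)"
    using assms(1) norm_triangle_ineq2[of c e0] by linarith
  have dp: "0 < cmod c - \<eta>" using assms by linarith
  have n: "cmod (\<beta>*e1 + zb*e0) \<le> (cmod zb + cmod \<beta>) * M"
  proof -
    have "cmod (\<beta>*e1 + zb*e0) \<le> cmod \<beta> * cmod e1 + cmod zb * cmod e0"
      by (metis norm_mult norm_triangle_ineq)
    also have "\<dots> \<le> cmod \<beta> * M + cmod zb * M"
      using assms by (intro add_mono mult_left_mono) auto
    finally show ?thesis by (simp add: algebra_simps)
  qed
  have M0: "0 \<le> M" using assms(4) norm_ge_zero order_trans by blast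
  have "cmod ((\<beta>*e1 + zb*e0)/(c - e0)) = cmod (\<beta>*e1 + zb*e0) / cmod (c - e0)"
    by (simp add: norm_divide)
  also have "\<dots> \<le> (cmod zb + cmod \<beta>) * M / (cmod c - \<eta>)"
    using n d dp M0 by (intro frac_le) auto
  finally show ?thesis by simp
qed

lemma main_stab:
  fixes \<alpha> \<beta> \<gamma> zb :: complex
  assumes fp: "\<alpha> + \<beta>*zb = zb*(\<gamma>-zb)" and lt: "cmod zb + cmod \<beta> < cmod (\<gamma> - zb)"
  shows "locally_asymptotically_stable \<alpha> \<beta> \<gamma> k zb"
  unfolding locally_asymptotically_stable_def
proof (intro allI impI)
  fix \<epsilon> :: real assume ep: "\<epsilon> > 0"
  define c where "c = \<gamma> - zb"
  define A where "A = cmod zb + cmod \<beta>"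
  define \<eta> where "\<eta> = (cmod c - A)/2"
  define q where "q = A / (cmod c - \<eta>)"
  have A0: "0 \<le> A" unfolding A_def by simp
  have Ac: "A < cmod c" using lt unfolding A_def c_def .
  have eta0: "\<eta> > 0" "\<eta> < cmod c" using Ac A0 unfolding \<eta>_def by auto
  have q0: "0 \<le> q" "q < 1" using A0 Ac unfolding q_def \<eta>_def
    by (auto simp: divide_simps)
  show "\<exists>\<delta>>0. \<forall>z. is_solution \<alpha> \<beta> \<gamma> k z \<and> (\<Sum>i\<in>{- int k..0}. cmod (z i - zb)) < \<delta> \<longrightarrow>
          (\<forall>n\<ge>- int k. cmod (z n - zb) < \<epsilon>) \<and> (\<lambda>n. z (int n)) \<longlonglongrightarrow> zb"
  proof (intro exI[of _ "min \<epsilon> \<eta>"] conjI allI impI)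
    show "min \<epsilon> \<eta> > 0" using ep eta0 by auto
    fix z assume H: "is_solution \<alpha> \<beta> \<gamma> k z \<and> (\<Sum>i\<in>{- int k..0}. cmod (z i - zb)) < min \<epsilon> \<eta>"
    define D where "D = (\<Sum>i\<in>{- int k..0}. cmod (z i - zb))"
    have D: "D < \<epsilon>" "D < \<eta>" using H unfolding D_def by auto
    have sol: "\<And>n. n \<ge> 0 \<Longrightarrow> z (n + 1) = (\<alpha> + \<beta> * z (n - int k)) / (\<gamma> - z n)"
      using H unfolding is_solution_def by auto
    define w where "w m = z (int m - int k) - zb" for m :: nat
    have init: "cmod (w m) \<le> D" if "m \<le> k" for m
      unfolding w_def D_def
      by (rule member_le_sum) (use that in auto)
    have rec: "w (Suc m) = (\<beta> * w (m - k) + zb * w m) / (c - w m)"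
      if "m \<ge> k" "cmod (w m) \<le> \<eta>" for m
    proof -
      define n where "n = int m - int k"
      have n0: "n \<ge> 0" using that unfolding n_def by auto
      have e1: "int (Suc m) - int k = n + 1" unfolding n_def by simp
      have e2: "n - int k = int (m - k) - int k" unfolding n_def using that by auto
      have wm: "w m = z n - zb" unfolding w_def n_def by simp
      have den: "\<gamma> - z n = c - w m" unfolding wm c_def by simp
      have nz: "c - w m \<noteq> 0"
      proof
        assume "c - w m = 0"
        then have "c = w m" by simp
        then show False using that eta0 by auto
      qed
      have "w (Suc m) = (\<alpha> + \<beta> * z (n - int k)) / (\<gamma> - z n) - zb"
        unfolding w_def e1 using sol[OF n0] by simp
      also have "\<dots> = (\<alpha> + \<beta> * (w (m-k) + zb)) / (c - w m) - zb"
        unfolding den e2 w_def by simp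
      also have "\<dots> = (\<beta> * w (m - k) + zb * w m) / (c - w m)"
        using nz fp unfolding c_def
        by (simp add: field_simps)
      finally show ?thesis .
    qed
    have D0: "0 \<le> D" unfolding D_def by (simp add: sum_nonneg)
    have bound: "cmod (w m) \<le> D * q ^ (m div (k+1))" for m
    proof (induction m rule: less_induct)
      case (less m)
      show ?case
      proof (cases "m \<le> k")
        case True
        then show ?thesis using init[OF True] by simp
      next
        case False
        then obtain m' where m': "m = Suc m'" "m' \<ge> k" by (cases m) auto
        define p where "p = m div (k+1)"
        have p1: "p \<ge> 1" unfolding p_def using False
          by (metis One_nat_def Suc_eq_plus1 Suc_le_eq add_gr_0 div_greater_zero_iff not_less_eq_eq)
        have ex1: "(m'-k) div (k+1) = p - 1" unfolding p_def using m' le_div_geq by force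
        have ex2: "m' div (k+1) \<ge> p - 1" unfolding p_def using m' by (simp add: div_Suc)
        have b1: "cmod (w (m'-k)) \<le> D * q ^ (p - 1)"
          using less.IH[of "m'-k"] m' ex1 by simp
        have b2: "cmod (w m') \<le> D * q ^ (p - 1)"
        proof -
          have "cmod (w m') \<le> D * q ^ (m' div (k+1))" using less.IH[of m'] m' by simp
          also have "\<dots> \<le> D * q ^ (p - 1)"
            using ex2 q0 D0 by (intro mult_left_mono power_decreasing) auto
          finally show ?thesis .
        qed
        have qp: "q ^ (p-1) \<le> 1" using q0 by (simp add: power_le_one)
        have "D * q ^ (p - 1) \<le> D" using qp D0 by (simp add: mult_left_le)
        then have small: "cmod (w m') \<le> \<eta>" using b2 D by linarith
        have "cmod (w m) = cmod ((\<beta> * w (m' - k) + zb * w m') / (c - w m'))"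
          using rec[OF m'(2) small] m' by simp
        also have "\<dots> \<le> A / (cmod c - \<eta>) * (D * q ^ (p - 1))"
          unfolding A_def using small eta0 b1 b2 by (intro step_bound) auto
        also have "\<dots> = D * q ^ p" unfolding q_def[symmetric] using p1
          by (metis mult.left_commute power_eq_if not_one_le_zero)
        finally show ?thesis unfolding p_def .
      qed
    qed
    have bD: "cmod (w m) \<le> D" for m
    proof -
      have "q ^ (m div (k+1)) \<le> 1" using q0 by (simp add: power_le_one)
      then have "D * q ^ (m div (k+1)) \<le> D" using D0 by (simp add: mult_left_le)
      then show ?thesis using bound[of m] by linarith
    qed
    show "cmod (z n - zb) < \<epsilon>" if "n \<ge> - int k" for n
    proof -
      from that have "n = int (nat (n + int k)) - int k" by simp
      then have "z n - zb = w (nat (n + int k))" unfolding w_def by metis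
      then show "cmod (z n - zb) < \<epsilon>" using bD[of "nat (n + int k)"] D by simp
    qed
    have lim0: "(\<lambda>m. D * q ^ (m div (k+1))) \<longlonglongrightarrow> 0"
    proof -
      have "(\<lambda>j. q ^ j) \<longlonglongrightarrow> 0" using q0 by (intro LIMSEQ_realpow_zero) auto
      moreover have "filterlim (\<lambda>m::nat. m div (k+1)) sequentially sequentially"
        unfolding filterlim_at_top
      proof (intro allI)
        fix Z :: nat show "eventually (\<lambda>m. Z \<le> m div (k+1)) sequentially"
          unfolding eventually_sequentially
          by (intro exI[of _ "Z*(k+1)"]) (auto simp: less_eq_div_iff_mult_less_eq)
      qed
      ultimately have "(\<lambda>m. q ^ (m div (k+1))) \<longlonglongrightarrow> 0"
        by (rule filterlim_compose)
      then show ?thesis using tendsto_mult_right_zero by blast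
    qed
    have "(\<lambda>m. w m) \<longlonglongrightarrow> 0"
    proof (rule tendsto_0_le[OF lim0, where K=1])
      show "\<forall>\<^sub>F x in sequentially. norm (w x) \<le> norm (D * q ^ (x div (k + 1))) * 1"
        using bound D0 q0 by (intro always_eventually allI) (simp add: abs_mult)
    qed
    then have "(\<lambda>n. w (n + k)) \<longlonglongrightarrow> 0" by (rule LIMSEQ_ignore_initial_segment)
    then have "(\<lambda>n. w (n + k) + zb) \<longlonglongrightarrow> 0 + zb" by (intro tendsto_add) auto
    moreover have "w (n + k) + zb = z (int n)" for n unfolding w_def by simp
    ultimately show "(\<lambda>n. z (int n)) \<longlonglongrightarrow> zb" by simp
  qed
qed

theorem theorem2p1:
  fixes \<alpha> \<beta> \<gamma> s :: complex and k :: nat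
  assumes s_def: "s\<^sup>2 = (\<beta> - \<gamma>)\<^sup>2 - 4 * \<alpha>"
    and nz1: "s + \<beta> + \<gamma> \<noteq> 0"
    and nz2: "\<alpha> + \<beta> * \<gamma> \<noteq> 0"
    and cond: "cmod (2 * \<beta> / (s + \<beta> + \<gamma>))
             + cmod ((\<gamma> * (- s - \<beta> + \<gamma>) - 2 * \<alpha>) / (2 * (\<alpha> + \<beta> * \<gamma>))) < 1"
  shows "locally_asymptotically_stable \<alpha> \<beta> \<gamma> k ((- s - \<beta> + \<gamma>) / 2)"
proof -
  define zb where "zb = (- s - \<beta> + \<gamma>) / 2"
  define c where "c = \<gamma> - zb"
  have c: "c = (s + \<beta> + \<gamma>)/2" unfolding c_def zb_def by (simp add: field_simps)
  have c0: "c \<noteq> 0" using nz1 c by auto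
  have quad: "zb^2 + (\<beta>-\<gamma>)*zb + \<alpha> = 0"
  proof -
    have "4*(zb^2 + (\<beta>-\<gamma>)*zb + \<alpha>) = s^2 - ((\<beta>-\<gamma>)^2 - 4*\<alpha>)"
      unfolding zb_def by (simp add: power2_eq_square field_simps)
    then have "4*(zb^2 + (\<beta>-\<gamma>)*zb + \<alpha>) = 0" using s_def by simp
    then show ?thesis by (simp only: mult_eq_0_iff) simp
  qed
  have fp: "\<alpha> + \<beta>*zb = zb*(\<gamma>-zb)" using quad
    by (simp add: power2_eq_square algebra_simps)
  have t1: "2 * \<beta> / (s + \<beta> + \<gamma>) = \<beta> / c" unfolding c using nz1 by (simp add: field_simps)
  have t2: "(\<gamma> * (- s - \<beta> + \<gamma>) - 2 * \<alpha>) / (2 * (\<alpha> + \<beta> * \<gamma>)) = zb / c"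
  proof -
    have e: "\<gamma> * (- s - \<beta> + \<gamma>) - 2 * \<alpha> = 2*(\<gamma>*zb - \<alpha>)" unfolding zb_def by simp
    have "(\<gamma>*zb - \<alpha>) * c = zb * (\<alpha> + \<beta> * \<gamma>)"
    proof -
      have "(\<gamma>*zb - \<alpha>) * c - zb * (\<alpha> + \<beta> * \<gamma>) = -\<gamma> * (zb^2 + (\<beta>-\<gamma>)*zb + \<alpha>)"
        unfolding c_def by (simp add: power2_eq_square algebra_simps)
      then show ?thesis using quad by simp
    qed
    then have "2*(\<gamma>*zb - \<alpha>) * c = zb * (2 * (\<alpha> + \<beta> * \<gamma>))"
      by (metis mult.assoc mult.left_commute)
    moreover have "2 * (\<alpha> + \<beta> * \<gamma>) \<noteq> 0" using nz2 by (simp only: mult_eq_0_iff) simp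
    ultimately show ?thesis unfolding e using c0 by (simp add: frac_eq_eq del: mult_eq_0_iff)
  qed
  have "cmod \<beta> / cmod c + cmod zb / cmod c < 1" using cond unfolding t1 t2 by (simp add: norm_divide)
  then have "cmod zb + cmod \<beta> < cmod c" using c0 by (simp add: field_simps)
  then show ?thesis using main_stab[OF fp] unfolding zb_def c_def by simp
qed

end
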